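(* If $G$ is a graph on $n$ vertices with vertex connectivity $\kappa$, then $\operatorname{th}_{\operatorname{H}}(G)\geq \lceil 2\sqrt{n-\kappa}+\kappa-1\rceil$.
   Context: All graphs are finite, simple and undirected; vertex connectivity follows the usual convention ($\kappa(K_n)=n-1$, and $\kappa=0$ for disconnected graphs). Hopping color change rule: a blue vertex $v$ may force a white vertex $w$ to become blue if $v$ has not previously performed a force and every neighbor of $v$ is blue. For an initial blue set $B$, a chronological list of forces of $B$ is a sequence of such forces applied one at a time until no further force is possible; its underlying unordered set is a set of forces of $B$. $B$ is a hopping forcing set if some chronological list of forces of $B$ turns all vertices blue. For a set of forces $\mathcal F$ of $B$, let $\mathcal F^{(0)}=B$ and for $t\geq1$ let $\mathcal F^{(t)}$ be the set of vertices $w\notin U_{t-1}:=\bigcup_{i=0}^{t-1}\mathcal F^{(i)}$ for which there is $(v\to w)\in\mathcal F$ with $v\in U_{t-1}$ and all neighbors of $v$ in $U_{t-1}$. $\operatorname{pt}_{\operatorname{H}}(G;\mathcal F)$ is the least $t$ with $\bigcup_{i=0}^t\mathcal F^{(i)}=V(G)$ ($\infty$ if none); $\operatorname{pt}_{\operatorname{H}}(G;B)$ is the minimum of $\operatorname{pt}_{\operatorname{H}}(G;\mathcal F)$ over sets of forces $\mathcal F$ of $B$ ($\infty$ if $B$ is not a hopping forcing set). The hopping throttling number is $\operatorname{th}_{\operatorname{H}}(G)=\min_{B\subseteq V(G)}\big(|B|+\operatorname{pt}_{\operatorname{H}}(G;B)\big)$. *)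

theory Defs
  imports Complex_Main "HOL-Library.Extended_Nat"
begin

definition simple_graph :: "'a set \<Rightarrow> ('a \<Rightarrow> 'a \<Rightarrow> bool) \<Rightarrow> bool" where
  "simple_graph V E \<longleftrightarrow> finite V \<and> (\<forall>u v. E u v \<longrightarrow> u \<in> V \<and> v \<in> V)
     \<and> (\<forall>u v. E u v \<longrightarrow> E v u) \<and> (\<forall>v. \<not> E v v)"

definition connected_on :: "'a set \<Rightarrow> ('a \<Rightarrow> 'a \<Rightarrow> bool) \<Rightarrow> bool" where
  "connected_on W E \<longleftrightarrow>
     (\<forall>u\<in>W. \<forall>v\<in>W. (\<lambda>x y. x \<in> W \<and> y \<in> W \<and> E x y)\<^sup>*\<^sup>* u v)"

text \<open>Vertex connectivity: least number of vertices whose removal leaves a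
  disconnected graph or at most one vertex (so kappa(K_n) = n-1, kappa = 0 if disconnected).\<close>
definition vertex_connectivity :: "'a set \<Rightarrow> ('a \<Rightarrow> 'a \<Rightarrow> bool) \<Rightarrow> nat" where
  "vertex_connectivity V E = (LEAST k. \<exists>S \<subseteq> V. card S = k \<and>
       (\<not> connected_on (V - S) E \<or> card (V - S) \<le> 1))"

text \<open>One hopping force v \<rightarrow> w is possible when the blue set is S and the set of
  vertices that already performed a force is D.\<close>
definition hop_step :: "'a set \<Rightarrow> ('a \<Rightarrow> 'a \<Rightarrow> bool) \<Rightarrow> 'a set \<Rightarrow> 'a set \<Rightarrow> 'a \<Rightarrow> 'a \<Rightarrow> bool" where
  "hop_step V E S D v w \<longleftrightarrow> v \<in> S \<and> v \<notin> D \<and> w \<in> V \<and> w \<notin> S \<and> (\<forall>u. E v u \<longrightarrow> u \<in> S)"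

definition can_hop :: "'a set \<Rightarrow> ('a \<Rightarrow> 'a \<Rightarrow> bool) \<Rightarrow> 'a set \<Rightarrow> 'a set \<Rightarrow> bool" where
  "can_hop V E S D \<longleftrightarrow> (\<exists>v w. hop_step V E S D v w)"

fun hop_valid :: "'a set \<Rightarrow> ('a \<Rightarrow> 'a \<Rightarrow> bool) \<Rightarrow> 'a set \<Rightarrow> 'a set \<Rightarrow> ('a \<times> 'a) list \<Rightarrow> bool" where
  "hop_valid V E S D [] = True"
| "hop_valid V E S D ((v, w) # fs) =
     (hop_step V E S D v w \<and> hop_valid V E (insert w S) (insert v D) fs)"

definition chron_list :: "'a set \<Rightarrow> ('a \<Rightarrow> 'a \<Rightarrow> bool) \<Rightarrow> 'a set \<Rightarrow> ('a \<times> 'a) list \<Rightarrow> bool" where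
  "chron_list V E B fs \<longleftrightarrow> hop_valid V E B {} fs \<and>
     \<not> can_hop V E (B \<union> snd ` set fs) (fst ` set fs)"

definition set_of_forces :: "'a set \<Rightarrow> ('a \<Rightarrow> 'a \<Rightarrow> bool) \<Rightarrow> 'a set \<Rightarrow> ('a \<times> 'a) set \<Rightarrow> bool" where
  "set_of_forces V E B F \<longleftrightarrow> (\<exists>fs. chron_list V E B fs \<and> F = set fs)"

definition hopping_forcing_set :: "'a set \<Rightarrow> ('a \<Rightarrow> 'a \<Rightarrow> bool) \<Rightarrow> 'a set \<Rightarrow> bool" where
  "hopping_forcing_set V E B \<longleftrightarrow> (\<exists>fs. chron_list V E B fs \<and> B \<union> snd ` set fs = V)"

text \<open>U t = F^(0) \<union> ... \<union> F^(t).\<close>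
fun hop_U :: "('a \<Rightarrow> 'a \<Rightarrow> bool) \<Rightarrow> 'a set \<Rightarrow> ('a \<times> 'a) set \<Rightarrow> nat \<Rightarrow> 'a set" where
  "hop_U E B F 0 = B"
| "hop_U E B F (Suc t) = hop_U E B F t \<union>
     {w. w \<notin> hop_U E B F t \<and> (\<exists>v. (v, w) \<in> F \<and> v \<in> hop_U E B F t \<and>
            (\<forall>u. E v u \<longrightarrow> u \<in> hop_U E B F t))}"

definition pt_H_forces :: "'a set \<Rightarrow> ('a \<Rightarrow> 'a \<Rightarrow> bool) \<Rightarrow> 'a set \<Rightarrow> ('a \<times> 'a) set \<Rightarrow> enat" where
  "pt_H_forces V E B F = (if \<exists>t. hop_U E B F t = V
      then enat (LEAST t. hop_U E B F t = V) else \<infinity>)"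

definition pt_H :: "'a set \<Rightarrow> ('a \<Rightarrow> 'a \<Rightarrow> bool) \<Rightarrow> 'a set \<Rightarrow> enat" where
  "pt_H V E B = (if hopping_forcing_set V E B
      then (INF F \<in> {F. set_of_forces V E B F}. pt_H_forces V E B F) else \<infinity>)"

definition th_H :: "'a set \<Rightarrow> ('a \<Rightarrow> 'a \<Rightarrow> bool) \<Rightarrow> enat" where
  "th_H V E = (INF B \<in> Pow V. enat (card B) + pt_H V E B)"

end

theory Submission
  imports Defs
begin

lemma hv_props: "hop_valid V E S D fs \<Longrightarrow> (\<forall>(v,w)\<in>set fs. w \<in> V \<and> w \<notin> S \<and> v \<notin> D) \<and> distinct (map fst fs) \<and> distinct (map snd fs)"
proof (induction fs arbitrary: S D)
  case Nil then show ?case by simp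
next
  case (Cons p fs)
  obtain v w where p: "p = (v,w)" by fastforce
  from Cons.prems p have st: "hop_step V E S D v w" and hv: "hop_valid V E (insert w S) (insert v D) fs" by auto
  from Cons.IH[OF hv] st show ?case unfolding p hop_step_def by (force simp: image_iff)
qed

lemma dist_snd: "distinct (map snd xs) \<Longrightarrow> (a,c)\<in>set xs \<Longrightarrow> (b,c)\<in>set xs \<Longrightarrow> a=b"
  by (induction xs) (force simp: image_iff)+

lemma dist_fst: "distinct (map fst xs) \<Longrightarrow> (a,c)\<in>set xs \<Longrightarrow> (a,b)\<in>set xs \<Longrightarrow> c=b"
  by (induction xs) (force simp: image_iff)+

locale hf =
  fixes V :: "'a set" and E :: "'a \<Rightarrow> 'a \<Rightarrow> bool" and B :: "'a set" and F :: "('a \<times> 'a) set"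
  assumes G: "simple_graph V E"
  and F1: "\<And>v w w'. (v,w)\<in>F \<Longrightarrow> (v,w')\<in>F \<Longrightarrow> w=w'"
  and F2: "\<And>v v' w. (v,w)\<in>F \<Longrightarrow> (v',w)\<in>F \<Longrightarrow> v=v'"
  and F3: "\<And>v w. (v,w)\<in>F \<Longrightarrow> w\<in>V \<and> w \<notin> B"
  and BV: "B \<subseteq> V"
begin

abbreviation U where "U t \<equiv> hop_U E B F t"

lemma finV: "finite V" using G unfolding simple_graph_def by auto

lemma U_sub: "U t \<subseteq> V"
  by (induction t) (auto dest: F3 simp: BV[THEN subsetD])

lemma U_Suc: "U t \<subseteq> U (Suc t)" by auto

lemma U_mono: "t \<le> s \<Longrightarrow> U t \<subseteq> U s"
  by (rule lift_Suc_mono_le[of U, OF U_Suc])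

lemma B_sub: "B \<subseteq> U t" using U_mono[of 0 t] by simp

lemma forcer: "w \<in> U t - B \<Longrightarrow> (v,w)\<in>F \<Longrightarrow> v \<in> U t \<and> (\<forall>u. E v u \<longrightarrow> u \<in> U t)"
proof (induction t)
  case 0 then show ?case by simp
next
  case (Suc t)
  show ?case
  proof (cases "w \<in> U t")
    case True
    with Suc have "v \<in> U t \<and> (\<forall>u. E v u \<longrightarrow> u \<in> U t)" by auto
    then show ?thesis using U_Suc[of t] by blast
  next
    case False
    with Suc.prems obtain v' where "(v',w)\<in>F" "v' \<in> U t" "\<forall>u. E v' u \<longrightarrow> u \<in> U t" by auto
    moreover have "v = v'" using F2 Suc.prems(2) calculation(1) by blast
    ultimately show ?thesis using U_Suc[of t] by blast
  qed
qed

lemma has_forcer: "w \<in> U t - B \<Longrightarrow> \<exists>v. (v,w)\<in>F"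
  by (induction t) auto

definition g where "g w = (SOME v. (v,w)\<in>F)"

lemma g_in: "\<exists>v. (v,w)\<in>F \<Longrightarrow> (g w, w) \<in> F"
  unfolding g_def by (rule someI_ex)

lemma g_inj: "(\<exists>v. (v,w)\<in>F) \<Longrightarrow> (\<exists>v. (v,w')\<in>F) \<Longrightarrow> g w = g w' \<Longrightarrow> w = w'"
  using g_in F1 by metis

definition bd where "bd t = {x \<in> U t. \<exists>y. E x y \<and> y \<notin> U t}"

lemma new_forcer: "w \<in> U (Suc t) - U t \<Longrightarrow> (\<exists>v. (v,w)\<in>F) \<and> g w \<in> U t - bd t"
proof -
  assume w: "w \<in> U (Suc t) - U t"
  then obtain v where v: "(v,w)\<in>F" "v \<in> U t" "\<forall>u. E v u \<longrightarrow> u \<in> U t" by auto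
  then have "g w = v" using g_in F2 by blast
  with v show ?thesis unfolding bd_def by auto
qed

lemma growth: "card (U (Suc t) - U t) + card (bd t) \<le> card B"
proof -
  define N where "N = U (Suc t) - U t"
  define A where "A = g ` (U t - B)"
  define C where "C = g ` N"
  have fin: "finite (U t)" using U_sub finV finite_subset by blast
  have hasN: "\<exists>v. (v,w)\<in>F" if "w \<in> N" for w using new_forcer that N_def by blast
  have hasA: "\<exists>v. (v,w)\<in>F" if "w \<in> U t - B" for w using has_forcer that by blast
  have CS: "C \<subseteq> U t - bd t" using new_forcer unfolding C_def N_def by blast
  have AS: "A \<subseteq> U t - bd t"
  proof
    fix x assume "x \<in> A"
    then obtain w where w: "w \<in> U t - B" "x = g w" unfolding A_def by blast
    then have "(x, w) \<in> F" using g_in hasA by blast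
    then show "x \<in> U t - bd t" using forcer w unfolding bd_def by blast
  qed
  have disj: "A \<inter> C = {}"
  proof (rule ccontr)
    assume "A \<inter> C \<noteq> {}"
    then obtain w w' where "w \<in> U t - B" "w' \<in> N" "g w = g w'" unfolding A_def C_def by blast
    then show False using g_inj[of w w'] hasA hasN N_def by blast
  qed
  have injA: "inj_on g (U t - B)" by (rule inj_onI) (use g_inj hasA in blast)
  have injC: "inj_on g N" by (rule inj_onI) (use g_inj hasN in blast)
  have finN: "finite N" using U_sub finV finite_subset N_def by (metis Diff_subset)
  have cA: "card A = card (U t) - card B" unfolding A_def
    using card_image[OF injA] B_sub[of t] fin card_Diff_subset[of B "U t"] finite_subset by metis
  have cC: "card C = card N" unfolding C_def using card_image[OF injC] .
  have "card A + card C = card (A \<union> C)"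
    using disj fin AS CS by (metis card_Un_disjoint finite_Diff finite_subset)
  also have "\<dots> \<le> card (U t - bd t)" using AS CS fin by (intro card_mono) auto
  also have "\<dots> = card (U t) - card (bd t)"
    using fin by (subst card_Diff_subset) (auto simp: bd_def finite_subset)
  finally have "card A + card C \<le> card (U t) - card (bd t)" .
  moreover have "card B \<le> card (U t)" using B_sub fin card_mono by blast
  moreover have "card (bd t) \<le> card (U t)" using fin card_mono unfolding bd_def by fastforce
  ultimately have "card N + card (bd t) \<le> card B" using cA cC by linarith
  then show ?thesis using N_def by simp
qed

lemma conn: assumes x: "x \<in> V - U t" and y: "y \<in> U t - bd t"
  shows "vertex_connectivity V E \<le> card (bd t)"
proof -
  let ?S = "bd t"
  have SU: "?S \<subseteq> U t" unfolding bd_def by auto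
  have SV: "?S \<subseteq> V" using SU U_sub by blast
  have nc: "\<not> connected_on (V - ?S) E"
  proof
    assume "connected_on (V - ?S) E"
    moreover have "x \<in> V - ?S" "y \<in> V - ?S" using x y SU U_sub by auto
    ultimately have r: "(\<lambda>a b. a \<in> V - ?S \<and> b \<in> V - ?S \<and> E a b)\<^sup>*\<^sup>* y x"
      unfolding connected_on_def by blast
    have "z \<in> U t - ?S" if "(\<lambda>a b. a \<in> V - ?S \<and> b \<in> V - ?S \<and> E a b)\<^sup>*\<^sup>* y z" for z
      using that
    proof (induction rule: rtranclp_induct)
      case base then show ?case using y .
    next
      case (step z z')
      then show ?case unfolding bd_def by blast
    qed
    from this[OF r] x show False by blast
  qed
  have "x \<noteq> y" using x y by blast
  moreover have "{x, y} \<subseteq> V - ?S" using x y SU U_sub by auto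
  ultimately have "2 \<le> card (V - ?S)"
    using card_mono[of "V - ?S" "{x,y}"] finV by auto
  then have "\<exists>S \<subseteq> V. card S = card ?S \<and> (\<not> connected_on (V - S) E \<or> card (V - S) \<le> 1)"
    using SV nc by blast
  then show ?thesis unfolding vertex_connectivity_def by (rule Least_le)
qed

lemma stuck: "U (Suc t) = U t \<Longrightarrow> U (t+k) = U t"
proof (induction k)
  case 0 then show ?case by simp
next
  case (Suc k)
  have "U (Suc (t+k)) = U (Suc t)" using Suc by (simp del: hop_U.simps) (simp only: hop_U.simps)
  then show ?case using Suc by simp
qed

lemma count: assumes UT: "U T = V" and less: "\<forall>t<T. U t \<noteq> V"
  shows "card V + T * vertex_connectivity V E \<le> (T+1) * card B"
proof -
  let ?k = "vertex_connectivity V E"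
  have nonstuck: "U (Suc t) - U t \<noteq> {}" if "t < T" for t
  proof
    assume "U (Suc t) - U t = {}"
    then have "U (Suc t) = U t" using U_Suc[of t] by blast
    from stuck[OF this, of "T - t"] that have "U T = U t" by simp
    with UT less that show False by simp
  qed
  have "card (U t) + t * ?k \<le> (t+1) * card B" if "t \<le> T" for t
    using that
  proof (induction t)
    case 0 then show ?case by simp
  next
    case (Suc t)
    then have tT: "t < T" by simp
    then obtain w where w: "w \<in> U (Suc t) - U t" using nonstuck by blast
    have y: "g w \<in> U t - bd t" using new_forcer[OF w] by blast
    obtain x where x: "x \<in> V - U t" using less tT U_sub[of t] by blast
    have k: "?k \<le> card (bd t)" using conn[OF x y] .
    have gr: "card (U (Suc t) - U t) + card (bd t) \<le> card B" by (rule growth)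
    have fin: "finite (U (Suc t))" using U_sub finV finite_subset by blast
    have "card (U (Suc t)) = card (U t) + card (U (Suc t) - U t)"
      using card_Diff_subset[OF finite_subset[OF U_Suc fin] U_Suc[of t]]
        card_mono[OF fin U_Suc[of t]] by linarith
    with Suc.IH tT k gr show ?case by simp
  qed
  from this[of T] UT show ?thesis by simp
qed

end

lemma real_bound:
  fixes n k b T :: nat
  assumes "n + T * k \<le> (T+1) * b" "k \<le> n"
  shows "nat \<lceil>2 * sqrt (real n - real k) + real k - 1\<rceil> \<le> b + T"
proof -
  have "(T+1) * k \<le> (T+1) * b" using assms by (simp add: algebra_simps)
  then have kb: "k \<le> b" using mult_le_cancel1[of "T+1" k b] by linarith
  define x where "x = real b - real k"
  define y where "y = real T + 1"
  have x0: "x \<ge> 0" "y \<ge> 0" using kb x_def y_def by auto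
  have "real n + real T * real k \<le> (real T + 1) * real b" using assms(1)
    by (metis of_nat_add of_nat_le_iff of_nat_mult of_nat_1)
  then have "real n - real k \<le> x * y" unfolding x_def y_def by (simp add: algebra_simps)
  then have "sqrt (real n - real k) \<le> sqrt x * sqrt y" by (simp add: real_sqrt_mult[symmetric])
  moreover have "2 * (sqrt x * sqrt y) \<le> x + y"
  proof -
    have "0 \<le> (sqrt x - sqrt y)^2" by simp
    then show ?thesis using x0 by (simp add: power2_eq_square algebra_simps)
  qed
  ultimately have "2 * sqrt (real n - real k) + real k - 1 \<le> real (b + T)"
    unfolding x_def y_def by simp
  then have "\<lceil>2 * sqrt (real n - real k) + real k - 1\<rceil> \<le> int (b + T)"
    by (metis ceiling_le_iff of_int_of_nat_eq)
  then show ?thesis by simp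
qed


lemma k_le_n: "vertex_connectivity V E \<le> card V"
proof -
  have "\<exists>S \<subseteq> V. card S = card V \<and> (\<not> connected_on (V - S) E \<or> card (V - S) \<le> 1)"
    by (intro exI[of _ V]) auto
  then show ?thesis unfolding vertex_connectivity_def by (rule Least_le)
qed

lemma per_B:
  assumes G: "simple_graph V E" and BV: "B \<subseteq> V"
  shows "enat (nat \<lceil>2 * sqrt (real (card V) - real (vertex_connectivity V E))
                          + real (vertex_connectivity V E) - 1\<rceil>) \<le> enat (card B) + pt_H V E B"
proof (cases "hopping_forcing_set V E B")
  case False then show ?thesis by (simp add: pt_H_def)
next
  case True
  let ?L = "nat \<lceil>2 * sqrt (real (card V) - real (vertex_connectivity V E))
                          + real (vertex_connectivity V E) - 1\<rceil>"
  have "enat (?L - card B) \<le> pt_H_forces V E B F" if sf: "set_of_forces V E B F" for F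
  proof -
    obtain fs where fs: "chron_list V E B fs" "F = set fs" using sf unfolding set_of_forces_def by blast
    have hp: "(\<forall>(v,w)\<in>set fs. w \<in> V \<and> w \<notin> B \<and> v \<notin> {}) \<and> distinct (map fst fs) \<and> distinct (map snd fs)"
      using hv_props fs(1) unfolding chron_list_def by blast
    interpret hf V E B F
    proof
      show "simple_graph V E" by (rule G)
      show "B \<subseteq> V" by (rule BV)
      show "\<And>v w w'. (v, w) \<in> F \<Longrightarrow> (v, w') \<in> F \<Longrightarrow> w = w'" using hp dist_fst fs(2) by metis
      show "\<And>v v' w. (v, w) \<in> F \<Longrightarrow> (v', w) \<in> F \<Longrightarrow> v = v'" using hp dist_snd fs(2) by metis
      show "\<And>v w. (v, w) \<in> F \<Longrightarrow> w \<in> V \<and> w \<notin> B" using hp fs(2) by blast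
    qed
    show ?thesis
    proof (cases "\<exists>t. hop_U E B F t = V")
      case False then show ?thesis by (simp add: pt_H_forces_def)
    next
      case True
      define T where "T = (LEAST t. hop_U E B F t = V)"
      have UT: "hop_U E B F T = V" using True unfolding T_def by (rule LeastI_ex)
      have less: "\<forall>t<T. hop_U E B F t \<noteq> V" unfolding T_def using not_less_Least by blast
      have "?L \<le> card B + T"
        using real_bound[OF count[OF UT less] k_le_n] by simp
      then show ?thesis using True unfolding pt_H_forces_def T_def[symmetric] by simp
    qed
  qed
  then have "enat (?L - card B) \<le> pt_H V E B"
    using True unfolding pt_H_def by (auto intro: INF_greatest)
  then have "enat (card B) + enat (?L - card B) \<le> enat (card B) + pt_H V E B"
    by (rule add_left_mono)
  moreover have "enat ?L \<le> enat (card B) + enat (?L - card B)" by simp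
  ultimately show ?thesis by (rule order_trans[rotated])
qed

theorem theorem3p1:
  fixes V :: "'a set" and E :: "'a \<Rightarrow> 'a \<Rightarrow> bool"
  assumes "simple_graph V E"
  shows "th_H V E \<ge> enat (nat \<lceil>2 * sqrt (real (card V) - real (vertex_connectivity V E))
                          + real (vertex_connectivity V E) - 1\<rceil>)"
  unfolding th_H_def using per_B[OF assms] by (auto intro: INF_greatest)

end
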